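(* Let $G$ be a graph, $\mathcal{B}$ a set of balls of $G$, and $X\subset V(G)$ a set such that $|V(H)\cup X|\le p$ for every connected component $H$ of $G-X$, where $p$ is the vertex integrity of $G$. Let $\mathcal{H}$ be the set of connected components of $G-X$. Then the number of equivalence classes of the twin-block relation $\sim_{\mathcal{B}}$ on $\mathcal{H}$ is at most $2^{\mathcal{O}(p^3)}$.
   Context: For a graph $G$, $r\ge 0$ and $v\in V(G)$, the ball $B_r(v)$ is the set of vertices at distance at most $r$ from $v$. The vertex integrity of $G$ is the minimum $b$ such that there is $X\subset V(G)$ with $|V(H)\cup X|\le b$ for every connected component $H$ of $G-X$. Two components $H,H'\in\mathcal{H}$ are twin-blocks with respect to $\mathcal{B}$, written $H\sim_{\mathcal{B}}H'$, if there is an isomorphism $\alpha$ from $H$ to $H'$ such that (i) for each $u\in V(H)$ and $v\in X$, $uv\in E(G)$ iff $\alpha(u)v\in E(G)$, and (ii) for each $u\in V(H)$ and $r\in\mathbb{N}$, $B_r(u)\in\mathcal{B}$ iff $B_r(\alpha(u))\in\mathcal{B}$. This is an equivalence relation. *)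

theory Defs
  imports Main
begin

definition graph :: "'a set \<Rightarrow> ('a \<Rightarrow> 'a \<Rightarrow> bool) \<Rightarrow> bool" where
  "graph V E \<longleftrightarrow> finite V \<and> (\<forall>x y. E x y \<longrightarrow> x \<in> V \<and> y \<in> V)
     \<and> (\<forall>x y. E x y \<longrightarrow> E y x) \<and> (\<forall>x. \<not> E x x)"

fun ball :: "('a \<Rightarrow> 'a \<Rightarrow> bool) \<Rightarrow> nat \<Rightarrow> 'a \<Rightarrow> 'a set" where
  "ball E 0 v = {v}"
| "ball E (Suc r) v = ball E r v \<union> {u. \<exists>w \<in> ball E r v. E w u}"

definition balls :: "'a set \<Rightarrow> ('a \<Rightarrow> 'a \<Rightarrow> bool) \<Rightarrow> 'a set set" where
  "balls V E = {ball E r v | r v. v \<in> V}"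

definition comp_of :: "('a \<Rightarrow> 'a \<Rightarrow> bool) \<Rightarrow> 'a set \<Rightarrow> 'a \<Rightarrow> 'a set" where
  "comp_of E S x = {y \<in> S. (\<lambda>a b. E a b \<and> a \<in> S \<and> b \<in> S)\<^sup>*\<^sup>* x y}"

definition comps :: "('a \<Rightarrow> 'a \<Rightarrow> bool) \<Rightarrow> 'a set \<Rightarrow> 'a set set" where
  "comps E S = {comp_of E S x | x. x \<in> S}"

text \<open>Vertex integrity (standard convention: |X| + max component size, with max over no components = 0).\<close>
definition vertex_integrity :: "'a set \<Rightarrow> ('a \<Rightarrow> 'a \<Rightarrow> bool) \<Rightarrow> nat" where
  "vertex_integrity V E = (LEAST b. \<exists>X \<subseteq> V. card X \<le> b \<and>
      (\<forall>H \<in> comps E (V - X). card (H \<union> X) \<le> b))"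

definition twin_blocks ::
  "('a \<Rightarrow> 'a \<Rightarrow> bool) \<Rightarrow> 'a set \<Rightarrow> 'a set set \<Rightarrow> 'a set \<Rightarrow> 'a set \<Rightarrow> bool" where
  "twin_blocks E X Bs H H' \<longleftrightarrow> (\<exists>\<alpha>. bij_betw \<alpha> H H'
      \<and> (\<forall>u \<in> H. \<forall>v \<in> H. E u v \<longleftrightarrow> E (\<alpha> u) (\<alpha> v))
      \<and> (\<forall>u \<in> H. \<forall>v \<in> X. E u v \<longleftrightarrow> E (\<alpha> u) v)
      \<and> (\<forall>u \<in> H. \<forall>r. ball E r u \<in> Bs \<longleftrightarrow> ball E r (\<alpha> u) \<in> Bs))"

definition twin_rel ::
  "('a \<Rightarrow> 'a \<Rightarrow> bool) \<Rightarrow> 'a set \<Rightarrow> 'a set set \<Rightarrow> 'a set set \<Rightarrow> ('a set \<times> 'a set) set" where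
  "twin_rel E X Bs \<H> = {(H, H'). H \<in> \<H> \<and> H' \<in> \<H> \<and> twin_blocks E X Bs H H'}"

end

theory Submission
  imports Defs
begin

lemma ball_mono_Suc: "ball E r u \<subseteq> ball E (Suc r) u"
  by auto

lemma ball_mono: "r \<le> s \<Longrightarrow> ball E r u \<subseteq> ball E s u"
proof (induction s)
  case 0 then show ?case by simp
next
  case (Suc s)
  then show ?case using ball_mono_Suc[of E s u] by (cases "r = Suc s") auto
qed

lemma ball_sub: "graph V E \<Longrightarrow> u \<in> V \<Longrightarrow> ball E r u \<subseteq> V"
  by (induction r) (auto simp: graph_def)

lemma ball_pred:
  assumes "v \<in> ball E (Suc r) u" "v \<notin> ball E r u"
  shows "\<exists>w \<in> ball E r u. E w v \<and> (r = 0 \<or> w \<notin> ball E (r - 1) u)"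
proof -
  obtain w where w: "w \<in> ball E r u" "E w v" using assms by auto
  have "r = 0 \<or> w \<notin> ball E (r - 1) u"
  proof (cases r)
    case 0 then show ?thesis by simp
  next
    case (Suc k)
    show ?thesis
    proof (rule ccontr)
      assume "\<not> (r = 0 \<or> w \<notin> ball E (r - 1) u)"
      then have "w \<in> ball E k u" using Suc by simp
      then have "v \<in> ball E (Suc k) u" using w(2) by auto
      with Suc assms(2) show False by simp
    qed
  qed
  with w show ?thesis by blast
qed

lemma rtranclp_sym_aux:
  assumes "\<And>a b. R a b \<Longrightarrow> R b a" "R\<^sup>*\<^sup>* x y"
  shows "R\<^sup>*\<^sup>* y x"
  using assms(2)
proof (induction rule: rtranclp_induct)
  case base then show ?case by simp
next
  case (step y z)
  then show ?case using assms(1) by (meson converse_rtranclp_into_rtranclp)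
qed

lemma comp_of_eq:
  assumes "graph V E" "y \<in> comp_of E S x"
  shows "comp_of E S y = comp_of E S x"
proof -
  let ?R = "\<lambda>a b. E a b \<and> a \<in> S \<and> b \<in> S"
  have sym: "\<And>a b. ?R a b \<Longrightarrow> ?R b a" using assms(1) by (auto simp: graph_def)
  have xy: "?R\<^sup>*\<^sup>* x y" using assms(2) by (simp add: comp_of_def)
  have yx: "?R\<^sup>*\<^sup>* y x" using rtranclp_sym_aux[OF sym xy] .
  show ?thesis unfolding comp_of_def
    using xy yx by (auto intro: rtranclp_trans)
qed

lemma comp_of_self: "x \<in> S \<Longrightarrow> x \<in> comp_of E S x"
  by (simp add: comp_of_def)

lemma comp_of_edge:
  assumes "graph V E" "E a b" "a \<in> S" "b \<in> S"
  shows "comp_of E S b = comp_of E S a"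
proof -
  have "b \<in> comp_of E S a" using assms(2-4) by (auto simp: comp_of_def)
  then show ?thesis using comp_of_eq[OF assms(1)] by blast
qed

lemma comp_in_comps: "x \<in> S \<Longrightarrow> comp_of E S x \<in> comps E S"
  by (auto simp: comps_def)

lemma comp_of_sub: "comp_of E S x \<subseteq> S"
  by (auto simp: comp_of_def)

context
  fixes V E X p u
  assumes G: "graph V E" and XV: "X \<subseteq> V"
    and hyp: "\<forall>H \<in> comps E (V - X). card (H \<union> X) \<le> p"
    and uV: "u \<in> V"
begin

lemma finV: "finite V" using G by (simp add: graph_def)

lemma comp_card: "w \<in> V - X \<Longrightarrow> card (comp_of E (V - X) w) \<le> p"
proof -
  assume w: "w \<in> V - X"
  have "card (comp_of E (V - X) w) \<le> card (comp_of E (V - X) w \<union> X)"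
    by (rule card_mono) (use finV XV comp_of_sub[of E "V - X" w] in \<open>auto intro: finite_subset\<close>)
  also have "\<dots> \<le> p" using hyp comp_in_comps[OF w] by blast
  finally show ?thesis .
qed

lemma layer_bound:
  "\<And>v. v \<in> ball E m u \<Longrightarrow> (m = 0 \<or> v \<notin> ball E (m - 1) u) \<Longrightarrow>
    (v \<in> X \<longrightarrow> m + 1 \<le> card (X \<inter> ball E m u) * (p + 1)) \<and>
    (v \<notin> X \<longrightarrow> m + 1 \<le> card (X \<inter> ball E m u) * (p + 1) + card (comp_of E (V - X) v \<inter> ball E m u))"
proof (induction m)
  case 0
  then have vu: "v = u" by simp
  show ?case
  proof (intro conjI impI)
    assume "v \<in> X" then show "0 + 1 \<le> card (X \<inter> ball E 0 u) * (p + 1)" using vu by simp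
  next
    assume "v \<notin> X"
    then have "u \<in> comp_of E (V - X) u" using vu uV by (simp add: comp_of_self)
    then show "0 + 1 \<le> card (X \<inter> ball E 0 u) * (p + 1) + card (comp_of E (V - X) v \<inter> ball E 0 u)"
      using vu by simp
  qed
next
  case (Suc m)
  have vn: "v \<notin> ball E m u" using Suc.prems by simp
  obtain w where w: "w \<in> ball E m u" "E w v" "m = 0 \<or> w \<notin> ball E (m - 1) u"
    using ball_pred[OF Suc.prems(1) vn] by blast
  note IH = Suc.IH[OF w(1) w(3)]
  have wV: "w \<in> V" and vV: "v \<in> V" using w(2) G by (auto simp: graph_def)
  have fb: "finite (ball E k u)" for k using ball_sub[OF G uV] finV finite_subset by blast
  have cmono: "card (X \<inter> ball E m u) \<le> card (X \<inter> ball E (Suc m) u)"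
    by (meson Int_mono card_mono fb finite_Int order_refl ball_mono_Suc)
  have cX: "v \<in> X \<Longrightarrow> card (X \<inter> ball E m u) + 1 \<le> card (X \<inter> ball E (Suc m) u)"
  proof -
    assume vX: "v \<in> X"
    have "X \<inter> ball E m u \<subset> X \<inter> ball E (Suc m) u"
      using vX vn Suc.prems(1) ball_mono_Suc[of E m u] by blast
    moreover have "finite (X \<inter> ball E (Suc m) u)" using fb by blast
    ultimately show ?thesis using psubset_card_mono by (metis Suc_eq_plus1 Suc_leI)
  qed
  have wc: "w \<notin> X \<Longrightarrow> card (comp_of E (V - X) w \<inter> ball E m u) \<le> p"
  proof -
    assume "w \<notin> X"
    then have "card (comp_of E (V - X) w) \<le> p" using comp_card wV by blast
    moreover have "finite (comp_of E (V - X) w)"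
      using comp_of_sub[of E "V - X" w] finV finite_subset by blast
    then have "card (comp_of E (V - X) w \<inter> ball E m u) \<le> card (comp_of E (V - X) w)"
      by (intro card_mono) auto
    ultimately show ?thesis by linarith
  qed
  define c0 where "c0 = card (X \<inter> ball E m u)"
  define c1 where "c1 = card (X \<inter> ball E (Suc m) u)"
  have cm: "c0 * (p + 1) \<le> c1 * (p + 1)"
    using cmono mult_le_mono1 unfolding c0_def c1_def by blast
  show ?case
  proof (intro conjI impI)
    assume vX: "v \<in> X"
    have A: "m + 1 \<le> c0 * (p + 1) + p"
    proof (cases "w \<in> X")
      case True then show ?thesis using IH unfolding c0_def by linarith
    next
      case False then show ?thesis using IH wc unfolding c0_def by linarith
    qed
    have "(c0 + 1) * (p + 1) \<le> c1 * (p + 1)"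
      using cX[OF vX] mult_le_mono1 unfolding c0_def c1_def by blast
    then have "Suc m + 1 \<le> c1 * (p + 1)" using A by (simp add: algebra_simps)
    then show "Suc m + 1 \<le> card (X \<inter> ball E (Suc m) u) * (p + 1)" by (simp only: c1_def)
  next
    assume vX: "v \<notin> X"
    let ?C = "comp_of E (V - X) v"
    have fC: "finite (?C \<inter> ball E (Suc m) u)" using fb by blast
    have "Suc m + 1 \<le> c1 * (p + 1) + card (?C \<inter> ball E (Suc m) u)"
    proof (cases "w \<in> X")
      case True
      have "v \<in> ?C" using vX vV comp_of_self[of v "V - X" E] by blast
      then have "v \<in> ?C \<inter> ball E (Suc m) u" using Suc.prems(1) by blast
      then have "card (?C \<inter> ball E (Suc m) u) > 0" using fC card_gt_0_iff by blast
      then have "1 \<le> card (?C \<inter> ball E (Suc m) u)" by linarith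
      moreover have "m + 1 \<le> c0 * (p + 1)" using IH True unfolding c0_def by blast
      ultimately show ?thesis using cm by linarith
    next
      case False
      have eq: "comp_of E (V - X) w = ?C" using comp_of_edge[OF G w(2)] wV vV vX False by blast
      have vC: "v \<in> ?C" using vX vV comp_of_self[of v "V - X" E] by blast
      have "?C \<inter> ball E m u \<subset> ?C \<inter> ball E (Suc m) u"
        using vn vC Suc.prems(1) ball_mono_Suc[of E m u] by blast
      then have "card (?C \<inter> ball E m u) + 1 \<le> card (?C \<inter> ball E (Suc m) u)"
        using psubset_card_mono[OF fC] by (metis Suc_eq_plus1 Suc_leI)
      moreover have "m + 1 \<le> c0 * (p + 1) + card (?C \<inter> ball E m u)"
        using IH False eq unfolding c0_def by (simp del: ball.simps)
      ultimately show ?thesis using cm by linarith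
    qed
    then show "Suc m + 1 \<le> card (X \<inter> ball E (Suc m) u) * (p + 1) + card (?C \<inter> ball E (Suc m) u)"
      by (simp only: c1_def)
  qed
qed
lemma layer_final:
  assumes cX: "card X \<le> p" and v: "v \<in> ball E m u" "m = 0 \<or> v \<notin> ball E (m - 1) u"
  shows "m + 1 \<le> p * (p + 1) + p"
proof -
  note L = layer_bound[OF v]
  have fX: "finite X" using XV finV finite_subset by blast
  have "card (X \<inter> ball E m u) \<le> card X" using fX by (intro card_mono) auto
  then have c: "card (X \<inter> ball E m u) * (p + 1) \<le> p * (p + 1)"
    using cX mult_le_mono1 le_trans by blast
  show ?thesis
  proof (cases "v \<in> X")
    case True then show ?thesis using L c by linarith
  next
    case False
    have vV: "v \<in> V" using ball_sub[OF G uV] v(1) by blast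
    let ?C = "comp_of E (V - X) v"
    have "card ?C \<le> p" using comp_card vV False by blast
    moreover have "finite ?C"
      using comp_of_sub[of E "V - X" v] finV finite_subset by blast
    then have "card (?C \<inter> ball E m u) \<le> card ?C"
      by (intro card_mono) auto
    ultimately show ?thesis using L c False by linarith
  qed
qed

lemma ball_step_stable:
  assumes cX: "card X \<le> p" and r: "p * p + 2 * p \<le> r"
  shows "ball E (Suc r) u = ball E r u"
proof (rule ccontr)
  assume "ball E (Suc r) u \<noteq> ball E r u"
  then obtain v where v1: "v \<in> ball E (Suc r) u" and v2: "v \<notin> ball E r u"
    using ball_mono_Suc[of E r u] by blast
  have "Suc r = 0 \<or> v \<notin> ball E (Suc r - 1) u" using v2 by (simp del: ball.simps)
  then have "Suc r + 1 \<le> p * (p + 1) + p" using layer_final[OF cX v1] by blast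
  moreover have "p * (p + 1) = p * p + p" by (simp add: algebra_simps)
  ultimately show False using r by linarith
qed

lemma ball_stable:
  assumes cX: "card X \<le> p" and r: "p * p + 2 * p \<le> r"
  shows "ball E r u = ball E (p * p + 2 * p) u"
  using r
proof (induction r rule: dec_induct)
  case base then show ?case by simp
next
  case (step n)
  then show ?case using ball_step_stable[OF cX step(1)] by (simp del: ball.simps)
qed

end

definition code :: "(nat \<Rightarrow> nat \<Rightarrow> bool) \<Rightarrow> nat set \<Rightarrow> nat set set \<Rightarrow> nat \<Rightarrow> nat set
    \<Rightarrow> nat \<times> (nat \<times> nat) set \<times> (nat \<times> nat) set \<times> (nat \<times> nat) set" where
  "code E X Bs D H = (let xs = sorted_list_of_set H; n = card H in
     (n, {(i, j). i < n \<and> j < n \<and> E (xs ! i) (xs ! j)},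
         {(i, x). i < n \<and> x \<in> X \<and> E (xs ! i) x},
         {(i, r). i < n \<and> r \<le> D \<and> ball E r (xs ! i) \<in> Bs}))"

lemma code_twin:
  assumes fH: "finite H" and fH': "finite H'" and eq: "code E X Bs D H = code E X Bs D H'"
    and stab: "\<forall>w \<in> H \<union> H'. \<forall>r \<ge> D. ball E r w = ball E D w"
  shows "twin_blocks E X Bs H H'"
proof -
  define xs where "xs = sorted_list_of_set H"
  define ys where "ys = sorted_list_of_set H'"
  define n where "n = card H"
  have n': "card H' = n" using eq unfolding code_def Let_def n_def by simp
  have lx: "length xs = n" and ly: "length ys = n" using n' unfolding xs_def ys_def n_def by simp_all
  have dx: "distinct xs" and dy: "distinct ys" unfolding xs_def ys_def by simp_all
  have sx: "set xs = H" and sy: "set ys = H'" unfolding xs_def ys_def using fH fH' by simp_all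
  have e1: "{(i, j). i < n \<and> j < n \<and> E (xs ! i) (xs ! j)} = {(i, j). i < n \<and> j < n \<and> E (ys ! i) (ys ! j)}"
   and e2: "{(i, x). i < n \<and> x \<in> X \<and> E (xs ! i) x} = {(i, x). i < n \<and> x \<in> X \<and> E (ys ! i) x}"
   and e3: "{(i, r). i < n \<and> r \<le> D \<and> ball E r (xs ! i) \<in> Bs} = {(i, r). i < n \<and> r \<le> D \<and> ball E r (ys ! i) \<in> Bs}"
    using eq n' unfolding code_def Let_def xs_def ys_def n_def by simp_all
  have A: "E (xs ! i) (xs ! j) \<longleftrightarrow> E (ys ! i) (ys ! j)" if "i < n" "j < n" for i j
  proof -
    have "(i, j) \<in> {(i, j). i < n \<and> j < n \<and> E (xs ! i) (xs ! j)} \<longleftrightarrow> (i, j) \<in> {(i, j). i < n \<and> j < n \<and> E (ys ! i) (ys ! j)}"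
      using e1 by simp
    then show ?thesis using that by simp
  qed
  have B: "E (xs ! i) x \<longleftrightarrow> E (ys ! i) x" if "i < n" "x \<in> X" for i x
  proof -
    have "(i, x) \<in> {(i, x). i < n \<and> x \<in> X \<and> E (xs ! i) x} \<longleftrightarrow> (i, x) \<in> {(i, x). i < n \<and> x \<in> X \<and> E (ys ! i) x}"
      using e2 by simp
    then show ?thesis using that by simp
  qed
  have C: "ball E r (xs ! i) \<in> Bs \<longleftrightarrow> ball E r (ys ! i) \<in> Bs" if "i < n" "r \<le> D" for i r
  proof -
    have "(i, r) \<in> {(i, r). i < n \<and> r \<le> D \<and> ball E r (xs ! i) \<in> Bs} \<longleftrightarrow> (i, r) \<in> {(i, r). i < n \<and> r \<le> D \<and> ball E r (ys ! i) \<in> Bs}"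
      using e3 by simp
    then show ?thesis using that by simp
  qed
  define \<alpha> where "\<alpha> = (\<lambda>v. the (map_of (zip xs ys) v))"
  have al: "\<alpha> (xs ! i) = ys ! i" if "i < n" for i
    unfolding \<alpha>_def using map_of_zip_nth[of xs ys i] lx ly dx that by simp
  have mem: "\<exists>i < n. u = xs ! i" if "u \<in> H" for u
    using that sx lx in_set_conv_nth[of u xs] by metis
  have inj: "inj_on \<alpha> H"
  proof (rule inj_onI)
    fix a b assume "a \<in> H" "b \<in> H" "\<alpha> a = \<alpha> b"
    then obtain i j where ij: "i < n" "j < n" "a = xs ! i" "b = xs ! j" "\<alpha> (xs ! i) = \<alpha> (xs ! j)"
      using mem by metis
    then have "ys ! i = ys ! j" using al by simp
    then have "i = j" using nth_eq_iff_index_eq[OF dy] ij ly by simp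
    then show "a = b" using ij by simp
  qed
  have img: "\<alpha> ` H = H'"
  proof
    show "\<alpha> ` H \<subseteq> H'"
    proof
      fix y assume "y \<in> \<alpha> ` H"
      then obtain i where "i < n" "y = \<alpha> (xs ! i)" using mem by blast
      then show "y \<in> H'" using al sy ly by (metis nth_mem)
    qed
  next
    show "H' \<subseteq> \<alpha> ` H"
    proof
      fix y assume "y \<in> H'"
      then obtain i where i: "i < n" "y = ys ! i" using sy ly in_set_conv_nth[of y ys] by metis
      then have "y = \<alpha> (xs ! i)" using al by simp
      moreover have "xs ! i \<in> H" using i sx lx by (metis nth_mem)
      ultimately show "y \<in> \<alpha> ` H" by blast
    qed
  qed
  have bij: "bij_betw \<alpha> H H'" using inj img by (simp add: bij_betw_def)
  have c1: "\<forall>u \<in> H. \<forall>v \<in> H. E u v \<longleftrightarrow> E (\<alpha> u) (\<alpha> v)"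
  proof (intro ballI)
    fix u v assume "u \<in> H" "v \<in> H"
    then obtain i j where "i < n" "j < n" "u = xs ! i" "v = xs ! j" using mem by metis
    then show "E u v \<longleftrightarrow> E (\<alpha> u) (\<alpha> v)" using A al by simp
  qed
  have c2: "\<forall>u \<in> H. \<forall>v \<in> X. E u v \<longleftrightarrow> E (\<alpha> u) v"
  proof (intro ballI)
    fix u v assume "u \<in> H" "v \<in> X"
    then obtain i where "i < n" "u = xs ! i" using mem by metis
    then show "E u v \<longleftrightarrow> E (\<alpha> u) v" using B al \<open>v \<in> X\<close> by simp
  qed
  have c3: "\<forall>u \<in> H. \<forall>r. ball E r u \<in> Bs \<longleftrightarrow> ball E r (\<alpha> u) \<in> Bs"
  proof (intro ballI allI)
    fix u r assume "u \<in> H"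
    then obtain i where i: "i < n" "u = xs ! i" using mem by metis
    have xi: "xs ! i \<in> H" using i sx lx by (metis nth_mem)
    have yi: "ys ! i \<in> H'" using i sy ly by (metis nth_mem)
    show "ball E r u \<in> Bs \<longleftrightarrow> ball E r (\<alpha> u) \<in> Bs"
    proof (cases "r \<le> D")
      case True then show ?thesis using C i al by simp
    next
      case False
      have s: "ball E r w = ball E D w" if "w \<in> H \<union> H'" for w
        using stab that False by (meson nat_le_linear)
      have "ball E r (xs ! i) = ball E D (xs ! i)" "ball E r (ys ! i) = ball E D (ys ! i)"
        using s xi yi by blast+
      then show ?thesis using C[of i D] i al by simp
    qed
  qed
  show ?thesis unfolding twin_blocks_def using bij c1 c2 c3 by blast
qed

lemma twin_trans:
  assumes "twin_blocks E X Bs A B" "twin_blocks E X Bs B C"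
  shows "twin_blocks E X Bs A C"
proof -
  obtain \<alpha> where a: "bij_betw \<alpha> A B" "\<forall>u \<in> A. \<forall>v \<in> A. E u v \<longleftrightarrow> E (\<alpha> u) (\<alpha> v)"
      "\<forall>u \<in> A. \<forall>v \<in> X. E u v \<longleftrightarrow> E (\<alpha> u) v" "\<forall>u \<in> A. \<forall>r. ball E r u \<in> Bs \<longleftrightarrow> ball E r (\<alpha> u) \<in> Bs"
    using assms(1) unfolding twin_blocks_def by blast
  obtain \<beta> where b: "bij_betw \<beta> B C" "\<forall>u \<in> B. \<forall>v \<in> B. E u v \<longleftrightarrow> E (\<beta> u) (\<beta> v)"
      "\<forall>u \<in> B. \<forall>v \<in> X. E u v \<longleftrightarrow> E (\<beta> u) v" "\<forall>u \<in> B. \<forall>r. ball E r u \<in> Bs \<longleftrightarrow> ball E r (\<beta> u) \<in> Bs"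
    using assms(2) unfolding twin_blocks_def by blast
  have m: "\<alpha> u \<in> B" if "u \<in> A" for u using bij_betw_apply[OF a(1) that] .
  have "bij_betw (\<beta> \<circ> \<alpha>) A C" by (rule bij_betw_trans[OF a(1) b(1)])
  moreover have "\<forall>u \<in> A. \<forall>v \<in> A. E u v \<longleftrightarrow> E ((\<beta> \<circ> \<alpha>) u) ((\<beta> \<circ> \<alpha>) v)"
  proof (intro ballI)
    fix u v assume "u \<in> A" "v \<in> A"
    then show "E u v \<longleftrightarrow> E ((\<beta> \<circ> \<alpha>) u) ((\<beta> \<circ> \<alpha>) v)"
      using a(2) b(2) m[of u] m[of v] unfolding comp_def by blast
  qed
  moreover have "\<forall>u \<in> A. \<forall>v \<in> X. E u v \<longleftrightarrow> E ((\<beta> \<circ> \<alpha>) u) v"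
  proof (intro ballI)
    fix u v assume "u \<in> A" "v \<in> X"
    then show "E u v \<longleftrightarrow> E ((\<beta> \<circ> \<alpha>) u) v"
      using a(3) b(3) m[of u] unfolding comp_def by blast
  qed
  moreover have "\<forall>u \<in> A. \<forall>r. ball E r u \<in> Bs \<longleftrightarrow> ball E r ((\<beta> \<circ> \<alpha>) u) \<in> Bs"
  proof (intro ballI allI)
    fix u r assume "u \<in> A"
    then show "ball E r u \<in> Bs \<longleftrightarrow> ball E r ((\<beta> \<circ> \<alpha>) u) \<in> Bs"
      using a(4) b(4) m[of u] unfolding comp_def by blast
  qed
  ultimately show ?thesis unfolding twin_blocks_def by blast
qed

lemma arith_bound:
  fixes p k :: nat
  assumes "k \<le> p"
  shows "(p + 1) * 2 ^ (p * p) * 2 ^ (p * k) * 2 ^ (p * (p * p + 2 * p + 1)) \<le> (2::nat) ^ (7 * p ^ 3)"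
proof -
  have a: "p + 1 \<le> (2::nat) ^ p" using less_exp[of p] by linarith
  have b: "(2::nat) ^ (p * k) \<le> 2 ^ (p * p)" using assms by (intro power_increasing) auto
  have "(p + 1) * 2 ^ (p * p) * 2 ^ (p * k) * 2 ^ (p * (p * p + 2 * p + 1))
      \<le> 2 ^ p * 2 ^ (p * p) * 2 ^ (p * p) * (2::nat) ^ (p * (p * p + 2 * p + 1))"
    using a b by (intro mult_mono) auto
  also have "\<dots> = 2 ^ (p + p * p + p * p + p * (p * p + 2 * p + 1))"
    by (simp add: power_add)
  also have "\<dots> \<le> 2 ^ (7 * p ^ 3)"
  proof (intro power_increasing)
    have "p \<le> p ^ 3 \<and> p * p \<le> p ^ 3"
    proof (cases "p = 0")
      case True then show ?thesis by simp
    next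
      case False
      then have p1: "1 \<le> p" by simp
      then have p2: "1 \<le> p * p" by simp
      have "p * 1 \<le> p * (p * p)" using p2 by (rule mult_le_mono2)
      moreover have "(p * p) * 1 \<le> (p * p) * p" using p1 by (rule mult_le_mono2)
      ultimately show ?thesis by (simp add: power3_eq_cube)
    qed
    moreover have "p * (p * p + 2 * p + 1) = p ^ 3 + 2 * (p * p) + p"
      by (simp add: algebra_simps power3_eq_cube)
    ultimately show "p + p * p + p * p + p * (p * p + 2 * p + 1) \<le> 7 * p ^ 3"
      by linarith
  qed simp
  finally show ?thesis .
qed

theorem mainTheorem4:
  "\<exists>c::nat. \<forall>(V::nat set) E Bs X p.
     graph V E \<and> Bs \<subseteq> balls V E \<and> X \<subseteq> V \<and> p = vertex_integrity V E
     \<and> (\<forall>H \<in> comps E (V - X). card (H \<union> X) \<le> p)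
     \<longrightarrow> card (comps E (V - X) // twin_rel E X Bs (comps E (V - X))) \<le> 2 ^ (c * p ^ 3)"
proof (rule exI[of _ 7], intro allI impI, elim conjE)
  fix V :: "nat set" and E Bs X p
  assume G: "graph V E" and XV: "X \<subseteq> V"
    and hyp: "\<forall>H \<in> comps E (V - X). card (H \<union> X) \<le> p"
  define C where "C = comps E (V - X)"
  define R where "R = twin_rel E X Bs C"
  have fV: "finite V" using G by (simp add: graph_def)
  have Csub: "H \<subseteq> V - X" if HC: "H \<in> C" for H
  proof -
    obtain x where "H = comp_of E (V - X) x" using HC unfolding C_def comps_def by blast
    then show ?thesis using comp_of_sub by simp
  qed
  have finH: "finite H" if "H \<in> C" for H using Csub[OF that] fV finite_subset by blast
  have fX: "finite X" using XV fV finite_subset by blast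
  have cardH: "card H \<le> p" if "H \<in> C" for H
  proof -
    have "card H \<le> card (H \<union> X)" using finH[OF that] fX by (intro card_mono) auto
    then show ?thesis using hyp that unfolding C_def by fastforce
  qed
  have "card (C // R) \<le> 2 ^ (7 * p ^ 3)"
  proof (cases "C = {}")
    case True
    then show ?thesis by (simp add: quotient_def)
  next
    case False
    then obtain H0 where H0: "H0 \<in> C" by blast
    have cX: "card X \<le> p"
    proof -
      have "card X \<le> card (H0 \<union> X)" using finH[OF H0] fX by (intro card_mono) auto
      then show ?thesis using hyp H0 unfolding C_def by fastforce
    qed
    define D where "D = p * p + 2 * p"
    have stab: "\<forall>w \<in> H \<union> H'. \<forall>r \<ge> D. ball E r w = ball E D w" if "H \<in> C" "H' \<in> C" for H H'
    proof (intro ballI allI impI)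
      fix w r assume "w \<in> H \<union> H'" "D \<le> r"
      then have "w \<in> V" using Csub that by blast
      then show "ball E r w = ball E D w"
        using ball_stable[OF G XV hyp _ cX] \<open>D \<le> r\<close> unfolding D_def by blast
    qed
    define g where "g = code E X Bs D"
    define f where "f = (\<lambda>H. R `` {H})"
    have Rimg: "f H = {H'. H' \<in> C \<and> twin_blocks E X Bs H H'}" if "H \<in> C" for H
      using that unfolding f_def R_def twin_rel_def by auto
    have key: "f H = f H'" if "H \<in> C" "H' \<in> C" "g H = g H'" for H H'
    proof -
      have t1: "twin_blocks E X Bs H H'"
        using code_twin[OF finH[OF that(1)] finH[OF that(2)]] that(3) stab[OF that(1,2)]
        unfolding g_def by blast
      have t2: "twin_blocks E X Bs H' H"
        using code_twin[OF finH[OF that(2)] finH[OF that(1)]] that(3) stab[OF that(2,1)]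
        unfolding g_def by (metis sup_commute)
      show ?thesis unfolding Rimg[OF that(1)] Rimg[OF that(2)]
        using t1 t2 twin_trans by blast
    qed
    have q: "C // R = f ` C" unfolding quotient_def f_def by blast
    have q2: "f ` C = (\<lambda>c. f (inv_into C g c)) ` (g ` C)"
    proof -
      have "f H = f (inv_into C g (g H))" if "H \<in> C" for H
      proof -
        have "inv_into C g (g H) \<in> C" using that by (simp add: inv_into_into)
        moreover have "g (inv_into C g (g H)) = g H" using that by (simp add: f_inv_into_f)
        ultimately show ?thesis using key that by metis
      qed
      then show ?thesis by (simp add: image_image cong: image_cong)
    qed
    define S where "S = {..p} \<times> Pow ({..<p} \<times> {..<p}) \<times> Pow ({..<p} \<times> X) \<times> Pow ({..<p} \<times> {..D})"
    have gS: "g ` C \<subseteq> S"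
    proof
      fix c assume "c \<in> g ` C"
      then obtain H where H: "H \<in> C" "c = g H" by blast
      have "card H \<le> p" using cardH H by blast
      then show "c \<in> S" unfolding H(2) g_def code_def S_def Let_def by auto
    qed
    have fS: "finite S" unfolding S_def using fX by simp
    have "card (C // R) \<le> card (g ` C)"
      unfolding q q2 by (rule card_image_le) (use gS fS finite_subset in blast)
    also have "\<dots> \<le> card S" using gS fS by (rule card_mono[rotated])
    also have "card S = (p + 1) * 2 ^ (p * p) * 2 ^ (p * card X) * 2 ^ (p * (D + 1))"
      unfolding S_def using fX by (simp add: card_cartesian_product card_Pow algebra_simps)
    also have "\<dots> \<le> 2 ^ (7 * p ^ 3)"
      using arith_bound[OF cX] unfolding D_def by (simp add: algebra_simps)
    finally show ?thesis .
  qed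
  then show "card (comps E (V - X) // twin_rel E X Bs (comps E (V - X))) \<le> 2 ^ (7 * p ^ 3)"
    unfolding C_def R_def .
qed

end
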